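(* Let $v\in\Sigma^*$, let $u$ be a $v$-minimal word and $i\in\mathrm{supp}(u)$. Then: (1) every element $g\in\mathcal{I}_i$ is $u$-representable (i.e. some word $u$-represents $g$); (2) if $w$ is a word that $u$-represents some $g\in\mathcal{I}_i\setminus\{0_i\}$, then $\mathrm{rk}(w)=\mathrm{Rnk}(\mathcal{I}_i)$; (3) if $x\in\Sigma^*$ satisfies $\theta_i(x)=0_i$ for some $i\in\mathrm{supp}(u)$, then $\theta_j(x)=0_j$ for all $j\in\mathrm{supp}(u)$.
   Context: Let $\mathcal{A}=\langle Q,\Sigma,\delta\rangle$ be a synchronizing automaton with $n$ states $q_1,\dots,q_n$; write $q\cdot u$ for the action of $u\in\Sigma^*$ and $\mathrm{rk}(u)=|Q\cdot u|$. Each word acts linearly on $\mathbb{C}Q$ by $q\mapsto q\cdot u$, preserving $w^\perp=\{x:\langle x,q_1+\dots+q_n\rangle=0\}$; let $\rho:\Sigma^*\to\mathbb{M}_{n-1}(\mathbb{C})$ be the induced representation, $\mathcal{R}$ the $\mathbb{C}$-algebra generated by $\rho(\Sigma^* )$, $\mathrm{Rad}(\mathcal{A})=\rho^{-1}(\mathrm{Rad}(\mathcal{R}))$. Write $\mathcal{R}/\mathrm{Rad}(\mathcal{R})\cong\prod_{i=1}^k\mathbb{M}_{n_i}(\mathbb{C})$ and let $\theta_i:\Sigma^*\to\mathbb{M}_{n_i}(\mathbb{C})$ be $\rho$ followed by the quotient map and the $i$-th projection; $0_i$ is the zero matrix. The monoid $\theta_i(\Sigma^* )$ has a unique $0$-minimal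 ideal $\mathcal{I}_i$; for $g\in\mathcal{I}_i\setminus\{0_i\}$ let $\mathrm{Rnk}_i(g)=\min\{\mathrm{rk}(u):\theta_i(u)=g\}$ and $\mathrm{Rnk}(\mathcal{I}_i)=\min\{\mathrm{Rnk}_i(g):g\in\mathcal{I}_i\setminus\{0_i\}\}$. The support of a word $z$ is $\mathrm{supp}(z)=\{i:\theta_i(z)\neq0_i\}$. For $v\in\Sigma^*$, a word $u\in\Sigma^*v\Sigma^*$ is $v$-minimal if $\mathrm{supp}(u)\neq\emptyset$ and there is no $z\in\Sigma^*v\Sigma^*$ with $\emptyset\neq\mathrm{supp}(z)\subsetneq\mathrm{supp}(u)$. For such $u$, $i\in\mathrm{supp}(u)$ and $g\in\mathcal{I}_i$, a word $w$ $u$-represents $g$ if $w\in\Sigma^*u\Sigma^*$, $\theta_i(w)=g$, and either $g=0_i$ or $\mathrm{rk}(w)$ is minimum among all words $w'\in\Sigma^*u\Sigma^*$ with $\theta_i(w')=g$. *)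

theory Defs
  imports Main "Jordan_Normal_Form.Matrix"
begin

text \<open>States are 0,...,n-1 (state q_(j+1) of the paper is j here); the alphabet is a
finite set Sig; words are lists over Sig; delta is the transition function.\<close>

definition act :: "(nat \<Rightarrow> 'a \<Rightarrow> nat) \<Rightarrow> nat \<Rightarrow> 'a list \<Rightarrow> nat" where
  "act delta q w = fold (\<lambda>a p. delta p a) w q"

definition is_automaton :: "nat \<Rightarrow> 'a set \<Rightarrow> (nat \<Rightarrow> 'a \<Rightarrow> nat) \<Rightarrow> bool" where
  "is_automaton n Sig delta \<longleftrightarrow> finite Sig \<and> (\<forall>q<n. \<forall>a\<in>Sig. delta q a < n)"

definition rk :: "nat \<Rightarrow> (nat \<Rightarrow> 'a \<Rightarrow> nat) \<Rightarrow> 'a list \<Rightarrow> nat" where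
  "rk n delta w = card ((\<lambda>q. act delta q w) ` {..<n})"

definition synchronizing :: "nat \<Rightarrow> 'a set \<Rightarrow> (nat \<Rightarrow> 'a \<Rightarrow> nat) \<Rightarrow> bool" where
  "synchronizing n Sig delta \<longleftrightarrow> (\<exists>w\<in>lists Sig. rk n delta w = 1)"

text \<open>Matrix of the action of w on w-perp, w.r.t. the basis b_j = e_j - e_(n-1), j < n-1,
using row vectors (x maps to x * rho w), so that rho (u @ v) = rho u * rho v.\<close>

definition rho :: "nat \<Rightarrow> (nat \<Rightarrow> 'a \<Rightarrow> nat) \<Rightarrow> 'a list \<Rightarrow> complex mat" where
  "rho n delta w = mat (n - 1) (n - 1)
     (\<lambda>(j, m). (if act delta j w = m then 1 else 0) - (if act delta (n - 1) w = m then 1 else 0))"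

inductive_set gen_alg :: "nat \<Rightarrow> 'a set \<Rightarrow> (nat \<Rightarrow> 'a \<Rightarrow> nat) \<Rightarrow> complex mat set"
  for n Sig delta where
  gen: "w \<in> lists Sig \<Longrightarrow> rho n delta w \<in> gen_alg n Sig delta"
| zero: "0\<^sub>m (n - 1) (n - 1) \<in> gen_alg n Sig delta"
| add: "x \<in> gen_alg n Sig delta \<Longrightarrow> y \<in> gen_alg n Sig delta \<Longrightarrow> x + y \<in> gen_alg n Sig delta"
| smult: "x \<in> gen_alg n Sig delta \<Longrightarrow> c \<cdot>\<^sub>m x \<in> gen_alg n Sig delta"
| mult: "x \<in> gen_alg n Sig delta \<Longrightarrow> y \<in> gen_alg n Sig delta \<Longrightarrow> x * y \<in> gen_alg n Sig delta"

definition left_ideal :: "complex mat set \<Rightarrow> nat \<Rightarrow> complex mat set \<Rightarrow> bool" where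
  "left_ideal RR m L \<longleftrightarrow> L \<subseteq> RR \<and> 0\<^sub>m m m \<in> L
     \<and> (\<forall>x\<in>L. \<forall>y\<in>L. x + y \<in> L) \<and> (\<forall>c. \<forall>x\<in>L. c \<cdot>\<^sub>m x \<in> L)
     \<and> (\<forall>r\<in>RR. \<forall>x\<in>L. r * x \<in> L)"

definition maximal_left_ideal :: "complex mat set \<Rightarrow> nat \<Rightarrow> complex mat set \<Rightarrow> bool" where
  "maximal_left_ideal RR m L \<longleftrightarrow> left_ideal RR m L \<and> L \<noteq> RR
     \<and> (\<forall>L'. left_ideal RR m L' \<and> L \<subseteq> L' \<longrightarrow> L' = L \<or> L' = RR)"

definition jac_rad :: "complex mat set \<Rightarrow> nat \<Rightarrow> complex mat set" where
  "jac_rad RR m = RR \<inter> \<Inter> {L. maximal_left_ideal RR m L}"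

text \<open>psi : R \<rightarrow> prod_(i<k) M_(d i)(C) is a surjective unital algebra homomorphism
with kernel Rad(R); the i-th component is psi x i (values for i \<ge> k are irrelevant).\<close>

definition wedderburn ::
  "complex mat set \<Rightarrow> nat \<Rightarrow> nat \<Rightarrow> (nat \<Rightarrow> nat) \<Rightarrow> (complex mat \<Rightarrow> nat \<Rightarrow> complex mat) \<Rightarrow> bool" where
  "wedderburn RR m k d psi \<longleftrightarrow>
     (\<forall>i<k. d i > 0)
   \<and> (\<forall>x\<in>RR. \<forall>i<k. psi x i \<in> carrier_mat (d i) (d i))
   \<and> (\<forall>x\<in>RR. \<forall>y\<in>RR. \<forall>i<k. psi (x + y) i = psi x i + psi y i)
   \<and> (\<forall>c. \<forall>x\<in>RR. \<forall>i<k. psi (c \<cdot>\<^sub>m x) i = c \<cdot>\<^sub>m psi x i)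
   \<and> (\<forall>x\<in>RR. \<forall>y\<in>RR. \<forall>i<k. psi (x * y) i = psi x i * psi y i)
   \<and> (\<forall>i<k. psi (1\<^sub>m m) i = 1\<^sub>m (d i))
   \<and> (\<forall>g. (\<forall>i<k. g i \<in> carrier_mat (d i) (d i)) \<longrightarrow> (\<exists>x\<in>RR. \<forall>i<k. psi x i = g i))
   \<and> (\<forall>x\<in>RR. (\<forall>i<k. psi x i = 0\<^sub>m (d i) (d i)) \<longleftrightarrow> x \<in> jac_rad RR m)"

definition theta :: "nat \<Rightarrow> (nat \<Rightarrow> 'a \<Rightarrow> nat) \<Rightarrow> (complex mat \<Rightarrow> nat \<Rightarrow> complex mat)
    \<Rightarrow> nat \<Rightarrow> 'a list \<Rightarrow> complex mat" where
  "theta n delta psi i w = psi (rho n delta w) i"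

definition monoid_ideal :: "complex mat set \<Rightarrow> complex mat set \<Rightarrow> bool" where
  "monoid_ideal S J \<longleftrightarrow> J \<subseteq> S \<and> J \<noteq> {} \<and> (\<forall>s\<in>S. \<forall>t\<in>S. \<forall>x\<in>J. s * x * t \<in> J)"

definition zero_minimal_ideal :: "complex mat set \<Rightarrow> complex mat \<Rightarrow> complex mat set \<Rightarrow> bool" where
  "zero_minimal_ideal S z J \<longleftrightarrow> monoid_ideal S J \<and> z \<in> J \<and> J \<noteq> {z}
     \<and> (\<forall>J'. monoid_ideal S J' \<and> J' \<subseteq> J \<longrightarrow> J' = {z} \<or> J' = J)"

definition Ideal_I :: "nat \<Rightarrow> 'a set \<Rightarrow> (nat \<Rightarrow> 'a \<Rightarrow> nat) \<Rightarrow> (nat \<Rightarrow> nat)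
    \<Rightarrow> (complex mat \<Rightarrow> nat \<Rightarrow> complex mat) \<Rightarrow> nat \<Rightarrow> complex mat set" where
  "Ideal_I n Sig delta d psi i =
     (THE J. zero_minimal_ideal (theta n delta psi i ` lists Sig) (0\<^sub>m (d i) (d i)) J)"

definition Rnk_i :: "nat \<Rightarrow> 'a set \<Rightarrow> (nat \<Rightarrow> 'a \<Rightarrow> nat)
    \<Rightarrow> (complex mat \<Rightarrow> nat \<Rightarrow> complex mat) \<Rightarrow> nat \<Rightarrow> complex mat \<Rightarrow> nat" where
  "Rnk_i n Sig delta psi i g = (LEAST r. \<exists>u\<in>lists Sig. theta n delta psi i u = g \<and> rk n delta u = r)"

definition Rnk_I :: "nat \<Rightarrow> 'a set \<Rightarrow> (nat \<Rightarrow> 'a \<Rightarrow> nat) \<Rightarrow> (nat \<Rightarrow> nat)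
    \<Rightarrow> (complex mat \<Rightarrow> nat \<Rightarrow> complex mat) \<Rightarrow> nat \<Rightarrow> nat" where
  "Rnk_I n Sig delta d psi i = (LEAST r. \<exists>g \<in> Ideal_I n Sig delta d psi i - {0\<^sub>m (d i) (d i)}.
       Rnk_i n Sig delta psi i g = r)"

definition supp :: "nat \<Rightarrow> (nat \<Rightarrow> 'a \<Rightarrow> nat) \<Rightarrow> nat \<Rightarrow> (nat \<Rightarrow> nat)
    \<Rightarrow> (complex mat \<Rightarrow> nat \<Rightarrow> complex mat) \<Rightarrow> 'a list \<Rightarrow> nat set" where
  "supp n delta k d psi z = {i. i < k \<and> theta n delta psi i z \<noteq> 0\<^sub>m (d i) (d i)}"

definition factor_lang :: "'a set \<Rightarrow> 'a list \<Rightarrow> 'a list set" where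
  "factor_lang Sig v = {x @ v @ y | x y. x \<in> lists Sig \<and> y \<in> lists Sig}"

definition v_minimal :: "nat \<Rightarrow> 'a set \<Rightarrow> (nat \<Rightarrow> 'a \<Rightarrow> nat) \<Rightarrow> nat \<Rightarrow> (nat \<Rightarrow> nat)
    \<Rightarrow> (complex mat \<Rightarrow> nat \<Rightarrow> complex mat) \<Rightarrow> 'a list \<Rightarrow> 'a list \<Rightarrow> bool" where
  "v_minimal n Sig delta k d psi v u \<longleftrightarrow> u \<in> factor_lang Sig v
     \<and> supp n delta k d psi u \<noteq> {}
     \<and> \<not> (\<exists>z\<in>factor_lang Sig v. supp n delta k d psi z \<noteq> {}
              \<and> supp n delta k d psi z \<subset> supp n delta k d psi u)"

definition u_represents :: "nat \<Rightarrow> 'a set \<Rightarrow> (nat \<Rightarrow> 'a \<Rightarrow> nat) \<Rightarrow> (nat \<Rightarrow> nat)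
    \<Rightarrow> (complex mat \<Rightarrow> nat \<Rightarrow> complex mat) \<Rightarrow> 'a list \<Rightarrow> nat \<Rightarrow> complex mat \<Rightarrow> 'a list \<Rightarrow> bool" where
  "u_represents n Sig delta d psi u i g w \<longleftrightarrow> w \<in> factor_lang Sig u
     \<and> theta n delta psi i w = g
     \<and> (g = 0\<^sub>m (d i) (d i) \<or>
        (\<forall>w'\<in>factor_lang Sig u. theta n delta psi i w' = g \<longrightarrow> rk n delta w \<le> rk n delta w'))"

end

theory Submission
  imports Defs "HOL-Library.FuncSet"
begin


lemma act_Nil[simp]: "act delta q [] = q" by (simp add: act_def)
lemma act_Cons[simp]: "act delta q (a#w) = act delta (delta q a) w" by (simp add: act_def)
lemma act_append: "act delta q (xs@ys) = act delta (act delta q xs) ys"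
  by (induction xs arbitrary: q) auto

lemma act_lt: "is_automaton n Sig delta \<Longrightarrow> w \<in> lists Sig \<Longrightarrow> q < n \<Longrightarrow> act delta q w < n"
  by (induction w arbitrary: q) (auto simp: is_automaton_def)

lemma rho_carrier[simp]: "rho n delta w \<in> carrier_mat (n-1) (n-1)"
  by (simp add: rho_def)

lemma rho_Nil: "rho n delta [] = 1\<^sub>m (n-1)"
  by (rule eq_matI) (auto simp: rho_def)

lemma sum_pick:
  fixes f :: "nat \<Rightarrow> complex"
  assumes "p < n" "f (n-1) = 0"
  shows "(\<Sum>l\<in>{0..<n-1}. (if p = l then 1 else 0) * f l) = f p"
proof -
  have "(\<Sum>l\<in>{0..<n-1}. (if p = l then 1 else 0) * f l) = (\<Sum>l\<in>{0..<n-1}. if p = l then f l else 0)"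
    by (rule sum.cong) auto
  also have "\<dots> = (if p \<in> {0..<n-1} then f p else 0)" by (simp add: sum.delta)
  also have "\<dots> = f p" using assms by (cases "p = n - 1") auto
  finally show ?thesis .
qed

lemma rho_append:
  assumes aut: "is_automaton n Sig delta" and xs: "xs \<in> lists Sig" and ys: "ys \<in> lists Sig"
  shows "rho n delta (xs@ys) = rho n delta xs * rho n delta ys"
proof (rule eq_matI)
  fix j m assume j: "j < dim_row (rho n delta xs * rho n delta ys)" and m: "m < dim_col (rho n delta xs * rho n delta ys)"
  hence j': "j < n - 1" and m': "m < n - 1" by (auto simp: rho_def)
  define f where "f l = (if act delta l ys = m then 1 else 0) - (if act delta (n-1) ys = m then 1 else (0::complex))" for l
  define p where "p = act delta j xs"
  define p' where "p' = act delta (n-1) xs"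
  have pn: "p < n" unfolding p_def using act_lt[OF aut xs] j' by auto
  have pn': "p' < n" unfolding p'_def using act_lt[OF aut xs] j' by auto
  have "(rho n delta xs * rho n delta ys) $$ (j, m) = (\<Sum>l\<in>{0..<n-1}. ((if p = l then 1 else 0) - (if p' = l then 1 else 0)) * f l)"
    using j' m' by (simp add: rho_def scalar_prod_def p_def p'_def f_def)
  also have "\<dots> = (\<Sum>l\<in>{0..<n-1}. (if p = l then 1 else 0) * f l) - (\<Sum>l\<in>{0..<n-1}. (if p' = l then 1 else 0) * f l)"
    by (simp add: left_diff_distrib sum_subtractf)
  also have "\<dots> = f p - f p'" using sum_pick[OF pn] sum_pick[OF pn'] by (simp add: f_def)
  also have "\<dots> = rho n delta (xs@ys) $$ (j, m)"
    using j' m' by (simp add: rho_def f_def p_def p'_def act_append)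
  finally show "rho n delta (xs @ ys) $$ (j, m) = (rho n delta xs * rho n delta ys) $$ (j, m)" by simp
qed (auto simp: rho_def)

lemma rho_rank1:
  assumes aut: "is_automaton n Sig delta" and "rk n delta s = 1"
  shows "rho n delta s = 0\<^sub>m (n-1) (n-1)"
proof -
  from assms(2) obtain c where c: "(\<lambda>q. act delta q s) ` {..<n} = {c}"
    unfolding rk_def by (auto simp: card_Suc_eq)
  have n: "n \<ge> 1" using c by (cases n) auto
  have "\<And>q. q < n \<Longrightarrow> act delta q s = c" using c by auto
  then show ?thesis using n by (intro eq_matI) (auto simp: rho_def)
qed



locale setting =
  fixes n :: nat and Sig :: "'a set" and delta :: "nat \<Rightarrow> 'a \<Rightarrow> nat"
    and k :: nat and d :: "nat \<Rightarrow> nat" and psi :: "complex mat \<Rightarrow> nat \<Rightarrow> complex mat"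
  assumes aut: "is_automaton n Sig delta"
    and sync: "synchronizing n Sig delta"
    and wed: "wedderburn (gen_alg n Sig delta) (n - 1) k d psi"
begin

abbreviation "th \<equiv> theta n delta psi"
abbreviation "RR \<equiv> gen_alg n Sig delta"

lemma psi_carrier: "x \<in> RR \<Longrightarrow> i < k \<Longrightarrow> psi x i \<in> carrier_mat (d i) (d i)"
  using conjunct1[OF conjunct2[OF wed[unfolded wedderburn_def]]] by blast
lemma psi_add: "x \<in> RR \<Longrightarrow> y \<in> RR \<Longrightarrow> i < k \<Longrightarrow> psi (x + y) i = psi x i + psi y i"
  using conjunct1[OF conjunct2[OF conjunct2[OF wed[unfolded wedderburn_def]]]] by blast
lemma psi_smult: "x \<in> RR \<Longrightarrow> i < k \<Longrightarrow> psi (c \<cdot>\<^sub>m x) i = c \<cdot>\<^sub>m psi x i"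
  using conjunct1[OF conjunct2[OF conjunct2[OF conjunct2[OF wed[unfolded wedderburn_def]]]]] by blast
lemma psi_mult: "x \<in> RR \<Longrightarrow> y \<in> RR \<Longrightarrow> i < k \<Longrightarrow> psi (x * y) i = psi x i * psi y i"
  using conjunct1[OF conjunct2[OF conjunct2[OF conjunct2[OF conjunct2[OF wed[unfolded wedderburn_def]]]]]] by blast
lemma psi_one: "i < k \<Longrightarrow> psi (1\<^sub>m (n-1)) i = 1\<^sub>m (d i)"
  using conjunct1[OF conjunct2[OF conjunct2[OF conjunct2[OF conjunct2[OF conjunct2[OF wed[unfolded wedderburn_def]]]]]]] by blast
lemma psi_surj: "(\<And>i. i < k \<Longrightarrow> g i \<in> carrier_mat (d i) (d i)) \<Longrightarrow> \<exists>x\<in>RR. \<forall>i<k. psi x i = g i"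
  using conjunct1[OF conjunct2[OF conjunct2[OF conjunct2[OF conjunct2[OF conjunct2[OF conjunct2[OF wed[unfolded wedderburn_def]]]]]]]] by blast
lemma d_pos: "i < k \<Longrightarrow> d i > 0"
  using conjunct1[OF wed[unfolded wedderburn_def]] by blast

lemma psi_zero[simp]: assumes "i < k" shows "psi (0\<^sub>m (n-1) (n-1)) i = 0\<^sub>m (d i) (d i)"
proof -
  have z: "0\<^sub>m (n-1) (n-1) \<in> RR" by (rule gen_alg.zero)
  have "psi (0\<^sub>m (n-1) (n-1)) i = psi (0 \<cdot>\<^sub>m 0\<^sub>m (n-1) (n-1)) i" by simp
  also have "\<dots> = 0 \<cdot>\<^sub>m psi (0\<^sub>m (n-1) (n-1)) i" using psi_smult[OF z assms] .
  also have "\<dots> = 0\<^sub>m (d i) (d i)" using psi_carrier[OF z assms] by (intro eq_matI) auto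
  finally show ?thesis .
qed

lemma psi_zero'[simp]: "i < k \<Longrightarrow> psi (0\<^sub>m (n - Suc 0) (n - Suc 0)) i = 0\<^sub>m (d i) (d i)"
  using psi_zero by simp

lemma th_carrier[simp]: "w \<in> lists Sig \<Longrightarrow> i < k \<Longrightarrow> th i w \<in> carrier_mat (d i) (d i)"
  unfolding theta_def by (rule psi_carrier) (auto intro: gen_alg.gen)

lemma th_append: "xs \<in> lists Sig \<Longrightarrow> ys \<in> lists Sig \<Longrightarrow> i < k \<Longrightarrow> th i (xs @ ys) = th i xs * th i ys"
  unfolding theta_def rho_append[OF aut] by (rule psi_mult) (auto intro: gen_alg.gen)

lemma th_Nil: "i < k \<Longrightarrow> th i [] = 1\<^sub>m (d i)"
  unfolding theta_def rho_Nil by (rule psi_one)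

lemma sync_word: obtains s where "s \<in> lists Sig" "\<And>i. i < k \<Longrightarrow> th i s = 0\<^sub>m (d i) (d i)"
proof -
  from sync obtain s where s: "s \<in> lists Sig" "rk n delta s = 1" unfolding synchronizing_def by auto
  show ?thesis by (rule that[OF s(1)]) (simp add: theta_def rho_rank1[OF aut s(2)] psi_zero)
qed

lemma th_rank1: "rk n delta s = 1 \<Longrightarrow> i < k \<Longrightarrow> th i s = 0\<^sub>m (d i) (d i)"
  by (simp add: theta_def rho_rank1[OF aut] psi_zero)

inductive_set spanL :: "nat \<Rightarrow> complex mat set" for i where
  gen: "w \<in> lists Sig \<Longrightarrow> th i w \<in> spanL i"
| zero: "0\<^sub>m (d i) (d i) \<in> spanL i"
| add: "x \<in> spanL i \<Longrightarrow> y \<in> spanL i \<Longrightarrow> x + y \<in> spanL i"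
| smult: "x \<in> spanL i \<Longrightarrow> c \<cdot>\<^sub>m x \<in> spanL i"

lemma spanL_carrier: "x \<in> spanL i \<Longrightarrow> i < k \<Longrightarrow> x \<in> carrier_mat (d i) (d i)"
  by (induction rule: spanL.induct) auto

lemma spanL_mult1: assumes "i < k" "w \<in> lists Sig" "y \<in> spanL i" shows "th i w * y \<in> spanL i"
  using assms(3)
proof (induction rule: spanL.induct)
  case (gen w') then show ?case using assms by (simp add: th_append[symmetric] spanL.gen)
next
  case zero
  have "th i w * 0\<^sub>m (d i) (d i) = 0\<^sub>m (d i) (d i)" using assms by (intro right_mult_zero_mat) simp
  then show ?case by (simp add: spanL.zero)
next
  case (add x y)
  have "th i w * (x + y) = th i w * x + th i w * y"
    using add assms spanL_carrier by (intro mult_add_distrib_mat[OF th_carrier]) auto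
  then show ?case using add by (simp add: spanL.add)
next
  case (smult x c)
  have "th i w * (c \<cdot>\<^sub>m x) = c \<cdot>\<^sub>m (th i w * x)"
    using smult assms spanL_carrier by (intro mult_smult_distrib[OF th_carrier]) auto
  then show ?case using smult by (simp add: spanL.smult)
qed

lemma spanL_mult: assumes "i < k" "x \<in> spanL i" "y \<in> spanL i" shows "x * y \<in> spanL i"
  using assms(2)
proof (induction rule: spanL.induct)
  case (gen w) then show ?case using assms spanL_mult1 by blast
next
  case zero
  have "0\<^sub>m (d i) (d i) * y = 0\<^sub>m (d i) (d i)" using assms spanL_carrier by (intro left_mult_zero_mat) auto
  then show ?case by (simp add: spanL.zero)
next
  case (add x1 x2)
  have "(x1 + x2) * y = x1 * y + x2 * y"
    using add assms spanL_carrier by (intro add_mult_distrib_mat[OF spanL_carrier spanL_carrier spanL_carrier]) auto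
  then show ?case using add by (simp add: spanL.add)
next
  case (smult x c)
  have "(c \<cdot>\<^sub>m x) * y = c \<cdot>\<^sub>m (x * y)"
    using smult assms spanL_carrier by (intro mult_smult_assoc_mat[OF spanL_carrier spanL_carrier]) auto
  then show ?case using smult by (simp add: spanL.smult)
qed

lemma psi_spanL: assumes "i < k" "x \<in> RR" shows "psi x i \<in> spanL i"
  using assms(2)
proof (induction rule: gen_alg.induct)
  case (gen w) then show ?case by (metis spanL.gen theta_def)
next
  case zero then show ?case using assms by (simp add: psi_zero spanL.zero)
next
  case (add x y) then show ?case using assms by (simp add: psi_add spanL.add)
next
  case (smult x c) then show ?case using assms by (simp add: psi_smult spanL.smult)
next
  case (mult x y) then show ?case using assms by (simp add: psi_mult spanL_mult)
qed

lemma mat_prime: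
  fixes g h :: "complex mat"
  assumes g: "g \<in> carrier_mat m m" and h: "h \<in> carrier_mat m m"
    and all: "\<And>M. M \<in> carrier_mat m m \<Longrightarrow> g * M * h = 0\<^sub>m m m"
  shows "g = 0\<^sub>m m m \<or> h = 0\<^sub>m m m"
proof (rule ccontr)
  assume neg: "\<not> ?thesis"
  have nz: "\<exists>a b. a < m \<and> b < m \<and> A $$ (a,b) \<noteq> 0" if A: "A \<in> carrier_mat m m" "A \<noteq> 0\<^sub>m m m" for A :: "complex mat"
  proof (rule ccontr)
    assume "\<not> (\<exists>a b. a < m \<and> b < m \<and> A $$ (a,b) \<noteq> 0)"
    hence "A = 0\<^sub>m m m" using A(1) by (intro eq_matI) auto
    with A(2) show False by simp
  qed
  obtain a b where ab: "a < m" "b < m" "g $$ (a,b) \<noteq> 0" using nz[OF g] neg by blast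
  obtain c e where ce: "c < m" "e < m" "h $$ (c,e) \<noteq> 0" using nz[OF h] neg by blast
  define M where "M = mat m m (\<lambda>(r,s). if r = b \<and> s = c then 1 else (0::complex))"
  have M: "M \<in> carrier_mat m m" by (simp add: M_def)
  have gM: "(g * M) $$ (a, r) = (if r = c then g $$ (a,b) else 0)" if "r < m" for r
  proof -
    have "(g * M) $$ (a, r) = (\<Sum>s\<in>{0..<m}. g $$ (a,s) * M $$ (s, r))"
      using g ab that by (simp add: M_def scalar_prod_def)
    also have "\<dots> = (\<Sum>s\<in>{0..<m}. if s = b then (if r = c then g $$ (a,b) else 0) else 0)"
      using that by (intro sum.cong) (auto simp: M_def)
    also have "\<dots> = (if r = c then g $$ (a,b) else 0)" using ab by (simp add: sum.delta)
    finally show ?thesis .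
  qed
  have "(g * M * h) $$ (a, e) = (\<Sum>r\<in>{0..<m}. (g * M) $$ (a,r) * h $$ (r, e))"
    using g h M ab ce by (simp del: assoc_mult_mat add: scalar_prod_def)
  also have "\<dots> = (\<Sum>r\<in>{0..<m}. if r = c then g $$ (a,b) * h $$ (c,e) else 0)"
    by (intro sum.cong) (auto simp: gM)
  also have "\<dots> = g $$ (a,b) * h $$ (c,e)" using ce by (simp add: sum.delta)
  finally have "(g * M * h) $$ (a, e) \<noteq> 0" using ab ce by simp
  moreover have "(g * M * h) $$ (a, e) = 0" using all[OF M] ab ce by simp
  ultimately show False by simp
qed

lemma prime:
  assumes i: "i < k" and g: "g \<in> carrier_mat (d i) (d i)" and h: "h \<in> carrier_mat (d i) (d i)"
    and gn: "g \<noteq> 0\<^sub>m (d i) (d i)" and hn: "h \<noteq> 0\<^sub>m (d i) (d i)"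
  shows "\<exists>a\<in>lists Sig. g * th i a * h \<noteq> 0\<^sub>m (d i) (d i)"
proof (rule ccontr)
  assume "\<not> ?thesis"
  hence all: "\<And>a. a \<in> lists Sig \<Longrightarrow> g * th i a * h = 0\<^sub>m (d i) (d i)" by blast
  have sp: "g * x * h = 0\<^sub>m (d i) (d i)" if "x \<in> spanL i" for x
    using that
  proof (induction rule: spanL.induct)
    case (gen w) then show ?case by (rule all)
  next
    case zero then show ?case using g h by simp
  next
    case (add x y)
    have x: "x \<in> carrier_mat (d i) (d i)" and y: "y \<in> carrier_mat (d i) (d i)"
      using add i spanL_carrier by auto
    have "g * (x + y) * h = (g * x + g * y) * h" using mult_add_distrib_mat[OF g x y] by simp
    also have "\<dots> = g * x * h + g * y * h"
      by (rule add_mult_distrib_mat[OF mult_carrier_mat[OF g x] mult_carrier_mat[OF g y] h])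
    finally have "g * (x + y) * h = g * x * h + g * y * h" .
    then show ?case using add by simp
  next
    case (smult x c)
    have x: "x \<in> carrier_mat (d i) (d i)" using smult i spanL_carrier by auto
    have "g * (c \<cdot>\<^sub>m x) * h = (c \<cdot>\<^sub>m (g * x)) * h" using mult_smult_distrib[OF g x] by simp
    also have "\<dots> = c \<cdot>\<^sub>m (g * x * h)" by (rule mult_smult_assoc_mat[OF mult_carrier_mat[OF g x] h])
    finally have "g * (c \<cdot>\<^sub>m x) * h = c \<cdot>\<^sub>m (g * x * h)" .
    then show ?case using smult by simp
  qed
  have "g * M * h = 0\<^sub>m (d i) (d i)" if M: "M \<in> carrier_mat (d i) (d i)" for M
  proof -
    obtain x where x: "x \<in> RR" "\<forall>j<k. psi x j = (if j = i then M else 0\<^sub>m (d j) (d j))"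
    proof -
      have "\<And>j. j < k \<Longrightarrow> (if j = i then M else 0\<^sub>m (d j) (d j)) \<in> carrier_mat (d j) (d j)"
        using M by auto
      then show ?thesis using that psi_surj[of "\<lambda>j. if j = i then M else 0\<^sub>m (d j) (d j)"] by blast
    qed
    have "M = psi x i" using x i by simp
    then show ?thesis using sp psi_spanL[OF i x(1)] by simp
  qed
  then show False using mat_prime[OF g h] gn hn by blast
qed

end


lemma rk_factor:
  assumes aut: "is_automaton n Sig delta" and x: "x \<in> lists Sig" and y: "y \<in> lists Sig"
  shows "rk n delta (x @ w @ y) \<le> rk n delta w"
proof -
  have "(\<lambda>q. act delta q (x @ w @ y)) ` {..<n}
        = (\<lambda>p. act delta p y) ` ((\<lambda>p. act delta p w) ` ((\<lambda>q. act delta q x) ` {..<n}))"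
    by (auto simp: act_append image_image)
  hence "rk n delta (x @ w @ y) \<le> card ((\<lambda>p. act delta p w) ` ((\<lambda>q. act delta q x) ` {..<n}))"
    unfolding rk_def by (simp add: card_image_le)
  also have "\<dots> \<le> rk n delta w" unfolding rk_def
    using act_lt[OF aut x] by (intro card_mono image_mono) auto
  finally show ?thesis .
qed

context setting begin

lemma n_pos: "n \<ge> 1"
proof -
  from sync obtain s where "rk n delta s = 1" unfolding synchronizing_def by auto
  then show ?thesis unfolding rk_def by (cases n) auto
qed

lemma rho_finite: "finite (rho n delta ` lists Sig)"
proof -
  define G where "G \<phi> = mat (n-1) (n-1) (\<lambda>(j, m). (if \<phi> j = m then 1 else 0) - (if \<phi> (n - 1) = m then 1 else (0::complex)))" for \<phi> :: "nat \<Rightarrow> nat"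
  have "rho n delta ` lists Sig \<subseteq> G ` ({..<n} \<rightarrow>\<^sub>E {..<n})"
  proof
    fix M assume "M \<in> rho n delta ` lists Sig"
    then obtain w where w: "w \<in> lists Sig" "M = rho n delta w" by auto
    define \<phi> where "\<phi> = restrict (\<lambda>j. act delta j w) {..<n}"
    have "\<phi> \<in> {..<n} \<rightarrow>\<^sub>E {..<n}" using act_lt[OF aut w(1)] by (auto simp: \<phi>_def)
    moreover have "M = G \<phi>" using w n_pos by (intro eq_matI) (auto simp: rho_def G_def \<phi>_def)
    ultimately show "M \<in> G ` ({..<n} \<rightarrow>\<^sub>E {..<n})" by auto
  qed
  then show ?thesis by (rule finite_subset) (intro finite_imageI finite_PiE; simp)
qed

abbreviation "S i \<equiv> th i ` lists Sig"

lemma S_finite: "finite (S i)"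
proof -
  have "S i = (\<lambda>M. psi M i) ` (rho n delta ` lists Sig)" by (auto simp: theta_def image_image)
  then show ?thesis using rho_finite by simp
qed

lemma th3: "p \<in> lists Sig \<Longrightarrow> q \<in> lists Sig \<Longrightarrow> r \<in> lists Sig \<Longrightarrow> i < k \<Longrightarrow>
  th i p * th i q * th i r = th i (p @ q @ r)"
  by (simp add: th_append assoc_mult_mat[OF th_carrier th_carrier th_carrier])

lemma ideal_mult:
  assumes "monoid_ideal (S i) J" "p \<in> lists Sig" "r \<in> lists Sig" "x \<in> J"
  shows "th i p * x * th i r \<in> J"
  using assms unfolding monoid_ideal_def by auto

lemma ideal_closed:
  assumes i: "i < k" and J: "monoid_ideal (S i) J" and p: "p \<in> lists Sig" and r: "r \<in> lists Sig"
    and x: "x \<in> J"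
  shows "\<exists>q\<in>lists Sig. x = th i q \<and> th i (p @ q @ r) \<in> J"
proof -
  from J x obtain q where q: "q \<in> lists Sig" "x = th i q" unfolding monoid_ideal_def by auto
  have "th i p * x * th i r \<in> J" using J x p r unfolding monoid_ideal_def by auto
  then show ?thesis using q th3[OF p q(1) r i] by auto
qed

lemma zero_in_S: "i < k \<Longrightarrow> 0\<^sub>m (d i) (d i) \<in> S i"
  by (metis image_eqI sync_word)

lemma ideal_zero:
  assumes i: "i < k" and J: "monoid_ideal (S i) J" shows "0\<^sub>m (d i) (d i) \<in> J"
proof -
  obtain s where s: "s \<in> lists Sig" "\<And>i. i < k \<Longrightarrow> th i s = 0\<^sub>m (d i) (d i)" using sync_word by blast
  from J obtain x where "x \<in> J" unfolding monoid_ideal_def by auto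
  from ideal_closed[OF i J s(1) s(1) this] obtain q where q: "q \<in> lists Sig" "th i (s @ q @ s) \<in> J" by auto
  have dq: "dim_row (th i q) = d i" "dim_col (th i q) = d i" using th_carrier[OF q(1) i] by auto
  have "th i (s @ q @ s) = th i s * th i q * th i s" using th3[OF s(1) q(1) s(1) i] by simp
  also have "\<dots> = 0\<^sub>m (d i) (d i)" using s(2)[OF i] dq by simp
  finally have "th i (s @ q @ s) = 0\<^sub>m (d i) (d i)" .
  then show ?thesis using q by simp
qed

lemma one_ne_zero: "i < k \<Longrightarrow> 1\<^sub>m (d i) \<noteq> (0\<^sub>m (d i) (d i) :: complex mat)"
proof
  assume "i < k" "1\<^sub>m (d i) = (0\<^sub>m (d i) (d i) :: complex mat)"
  hence "(1\<^sub>m (d i) :: complex mat) $$ (0,0) = 0\<^sub>m (d i) (d i) $$ (0,0)" by simp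
  with d_pos[OF \<open>i < k\<close>] show False by simp
qed

lemma S_ideal: "i < k \<Longrightarrow> monoid_ideal (S i) (S i)"
  unfolding monoid_ideal_def
proof (intro conjI ballI)
  fix s t x assume "i < k" "s \<in> S i" "t \<in> S i" "x \<in> S i"
  then obtain p q r where "p \<in> lists Sig" "q \<in> lists Sig" "r \<in> lists Sig" "s = th i p" "t = th i r" "x = th i q"
    by auto
  then show "s * x * t \<in> S i" using th3[of p q r i] \<open>i < k\<close> by (metis append_in_lists_conv imageI)
qed auto

lemma zmi_exists: assumes i: "i < k" shows "\<exists>J. zero_minimal_ideal (S i) (0\<^sub>m (d i) (d i)) J"
proof -
  define P where "P J \<longleftrightarrow> monoid_ideal (S i) J \<and> J \<noteq> {0\<^sub>m (d i) (d i)}" for J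
  have "1\<^sub>m (d i) \<in> S i" using th_Nil[OF i] by (metis image_eqI lists.Nil)
  hence "S i \<noteq> {0\<^sub>m (d i) (d i)}" using one_ne_zero[OF i] by auto
  hence "P (S i)" unfolding P_def using S_ideal[OF i] by simp
  then have ex: "\<exists>r J. P J \<and> card J = r" by auto
  define r0 where "r0 = (LEAST r. \<exists>J. P J \<and> card J = r)"
  obtain J where J: "P J" "card J = r0" using LeastI_ex[OF ex] r0_def by auto
  have min: "card J \<le> card J'" if "P J'" for J'
  proof -
    have "r0 \<le> card J'" unfolding r0_def by (rule Least_le) (use that in blast)
    then show ?thesis using J(2) by simp
  qed
  have "zero_minimal_ideal (S i) (0\<^sub>m (d i) (d i)) J"
    unfolding zero_minimal_ideal_def
  proof (intro conjI allI impI)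
    show "monoid_ideal (S i) J" "J \<noteq> {0\<^sub>m (d i) (d i)}" using J(1) P_def by auto
    show "0\<^sub>m (d i) (d i) \<in> J" using ideal_zero[OF i] J(1) P_def by auto
    fix J' assume J': "monoid_ideal (S i) J' \<and> J' \<subseteq> J"
    show "J' = {0\<^sub>m (d i) (d i)} \<or> J' = J"
    proof (cases "J' = {0\<^sub>m (d i) (d i)}")
      case False
      hence "P J'" using J' unfolding P_def by simp
      hence "card J \<le> card J'" by (rule min)
      moreover have "J \<subseteq> S i" using J(1) unfolding P_def monoid_ideal_def by simp
      hence "finite J" using S_finite by (rule finite_subset)
      moreover have "J' \<subseteq> J" using J' by simp
      ultimately have "J' = J" using card_subset_eq[of J J'] card_mono[of J J'] by simp
      then show ?thesis by simp
    qed simp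
  qed
  then show ?thesis by blast
qed

lemma zmi_unique:
  assumes i: "i < k" and J1: "zero_minimal_ideal (S i) (0\<^sub>m (d i) (d i)) J1"
    and J2: "zero_minimal_ideal (S i) (0\<^sub>m (d i) (d i)) J2"
  shows "J1 = J2"
proof -
  let ?z = "0\<^sub>m (d i) (d i)"
  have I: "monoid_ideal (S i) (J1 \<inter> J2)"
  proof -
    have "monoid_ideal (S i) J1" "monoid_ideal (S i) J2" "0\<^sub>m (d i) (d i) \<in> J1" "0\<^sub>m (d i) (d i) \<in> J2"
      using J1 J2 unfolding zero_minimal_ideal_def by auto
    then show ?thesis unfolding monoid_ideal_def by auto
  qed
  have c1: "J1 \<inter> J2 = {?z} \<or> J1 \<inter> J2 = J1" using J1 I unfolding zero_minimal_ideal_def by blast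
  have c2: "J1 \<inter> J2 = {?z} \<or> J1 \<inter> J2 = J2" using J2 I unfolding zero_minimal_ideal_def by blast
  have n1: "J1 \<noteq> {?z}" and n2: "J2 \<noteq> {?z}" using J1 J2 unfolding zero_minimal_ideal_def by auto
  have z1: "?z \<in> J1" and z2: "?z \<in> J2" using J1 J2 unfolding zero_minimal_ideal_def by auto
  have mi1: "monoid_ideal (S i) J1" and mi2: "monoid_ideal (S i) J2"
    using J1 J2 unfolding zero_minimal_ideal_def by auto
  show ?thesis
  proof (cases "J1 \<inter> J2 = {?z}")
    case False then show ?thesis using c1 c2 by auto
  next
    case True
    obtain g where g: "g \<in> J1" "g \<noteq> ?z" using n1 z1 by blast
    obtain h where h: "h \<in> J2" "h \<noteq> ?z" using n2 z2 by blast
    obtain p where p: "p \<in> lists Sig" "g = th i p" using mi1 g unfolding monoid_ideal_def by auto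
    obtain q where q: "q \<in> lists Sig" "h = th i q" using mi2 h unfolding monoid_ideal_def by auto
    obtain a where a: "a \<in> lists Sig" "g * th i a * h \<noteq> ?z"
      using prime[OF i _ _ g(2) h(2)] p q i by auto
    have e: "g * th i a * h = th i (p @ a @ q)" using th3[OF p(1) a(1) q(1) i] p q by simp
    have "th i [] * th i p * th i (a @ q) \<in> J1"
      using ideal_mult[OF mi1 _ _ g(1), of "[]" "a @ q"] a q p by simp
    hence "th i ([] @ p @ (a @ q)) \<in> J1" using th3[of "[]" p "a @ q" i] a p q i by simp
    moreover have "th i (p @ a) * th i q * th i [] \<in> J2"
      using ideal_mult[OF mi2 _ _ h(1), of "p @ a" "[]"] a p q by simp
    hence "th i ((p @ a) @ q @ []) \<in> J2" using th3[of "p @ a" q "[]" i] a p q i by simp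
    ultimately have "g * th i a * h \<in> J1 \<inter> J2" using e by simp
    then show ?thesis using True a by simp
  qed
qed

lemma Ideal_I_zmi: assumes i: "i < k" shows "zero_minimal_ideal (S i) (0\<^sub>m (d i) (d i)) (Ideal_I n Sig delta d psi i)"
proof -
  obtain J where J: "zero_minimal_ideal (S i) (0\<^sub>m (d i) (d i)) J" using zmi_exists[OF i] by auto
  have "Ideal_I n Sig delta d psi i = J" unfolding Ideal_I_def
    using J zmi_unique[OF i] by (intro the_equality) auto
  then show ?thesis using J by simp
qed

end


lemma factor_lang_lists: "u \<in> lists Sig \<Longrightarrow> w \<in> factor_lang Sig u \<Longrightarrow> w \<in> lists Sig"
  unfolding factor_lang_def by auto

lemma factor_langI: "x \<in> lists Sig \<Longrightarrow> y \<in> lists Sig \<Longrightarrow> x @ u @ y \<in> factor_lang Sig u"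
  unfolding factor_lang_def by auto

context setting begin

abbreviation "II i \<equiv> Ideal_I n Sig delta d psi i"

lemma II_ideal: "i < k \<Longrightarrow> monoid_ideal (S i) (II i)"
  using Ideal_I_zmi unfolding zero_minimal_ideal_def by blast

lemma II_min: "i < k \<Longrightarrow> monoid_ideal (S i) J \<Longrightarrow> J \<subseteq> II i \<Longrightarrow> J = {0\<^sub>m (d i) (d i)} \<or> J = II i"
  using Ideal_I_zmi unfolding zero_minimal_ideal_def by blast

lemma II_zero: "i < k \<Longrightarrow> 0\<^sub>m (d i) (d i) \<in> II i"
  using Ideal_I_zmi unfolding zero_minimal_ideal_def by blast

lemma th_zero_mid:
  assumes "p \<in> lists Sig" "q \<in> lists Sig" "r \<in> lists Sig" "l < k" "th l q = 0\<^sub>m (d l) (d l)"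
  shows "th l (p @ q @ r) = 0\<^sub>m (d l) (d l)"
proof -
  have dp: "dim_col (th l p) = d l" "dim_row (th l p) = d l" using th_carrier[OF assms(1,4)] by auto
  have dr: "dim_col (th l r) = d l" "dim_row (th l r) = d l" using th_carrier[OF assms(3,4)] by auto
  have "th l (p @ q @ r) = th l p * th l q * th l r" using th3[OF assms(1-4)] by simp
  also have "\<dots> = 0\<^sub>m (d l) (d l)" using assms(5) dp dr by simp
  finally show ?thesis .
qed

lemma keyG:
  assumes i: "i < k" and u: "u \<in> lists Sig" and un: "th i u \<noteq> 0\<^sub>m (d i) (d i)"
    and w': "w' \<in> lists Sig" and hI: "th i w' \<in> II i" and hn: "th i w' \<noteq> 0\<^sub>m (d i) (d i)"
    and g: "g \<in> II i"
  shows "\<exists>x a y. x \<in> lists Sig \<and> a \<in> lists Sig \<and> y \<in> lists Sig \<and> g = th i (x @ w' @ a @ u @ y)"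
proof -
  have mi: "monoid_ideal (S i) (II i)" by (rule II_ideal[OF i])
  obtain a where a: "a \<in> lists Sig" "th i w' * th i a * th i u \<noteq> 0\<^sub>m (d i) (d i)"
    using prime[OF i th_carrier[OF w' i] th_carrier[OF u i] hn un] by blast
  define W where "W = w' @ a @ u"
  have W: "W \<in> lists Sig" using w' a u by (simp add: W_def)
  have hW: "th i W \<noteq> 0\<^sub>m (d i) (d i)" using a th3[OF w' a(1) u i] by (simp add: W_def)
  have "th i [] * th i w' * th i (a @ u) \<in> II i" using ideal_mult[OF mi _ _ hI, of "[]" "a @ u"] a u by simp
  hence WI: "th i W \<in> II i" using th3[of "[]" w' "a @ u" i] w' a u i by (simp add: W_def)
  define K where "K = {th i (x @ W @ y) | x y. x \<in> lists Sig \<and> y \<in> lists Sig}"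
  have KI: "K \<subseteq> II i"
  proof
    fix z assume "z \<in> K"
    then obtain x y where xy: "x \<in> lists Sig" "y \<in> lists Sig" "z = th i (x @ W @ y)" unfolding K_def by auto
    have "th i x * th i W * th i y \<in> II i" by (rule ideal_mult[OF mi xy(1) xy(2) WI])
    then show "z \<in> II i" using th3[OF xy(1) W xy(2) i] xy(3) by simp
  qed
  have WK: "th i W \<in> K" unfolding K_def by (rule CollectI, rule exI[of _ "[]"], rule exI[of _ "[]"]) simp
  have "monoid_ideal (S i) K" unfolding monoid_ideal_def
  proof (intro conjI ballI)
    show "K \<subseteq> S i" unfolding K_def
    proof
      fix z assume "z \<in> {th i (x @ W @ y) | x y. x \<in> lists Sig \<and> y \<in> lists Sig}"
      then obtain x y where "x \<in> lists Sig" "y \<in> lists Sig" "z = th i (x @ W @ y)" by blast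
      moreover hence "x @ W @ y \<in> lists Sig" using W by simp
      ultimately show "z \<in> S i" by blast
    qed
    show "K \<noteq> {}" using WK by auto
    fix s t z assume st: "s \<in> S i" "t \<in> S i" and z: "z \<in> K"
    obtain p r where pr: "p \<in> lists Sig" "r \<in> lists Sig" "s = th i p" "t = th i r" using st by auto
    obtain x y where xy: "x \<in> lists Sig" "y \<in> lists Sig" "z = th i (x @ W @ y)" using z unfolding K_def by auto
    have "s * z * t = th i (p @ (x @ W @ y) @ r)" using th3[of p "x @ W @ y" r i] pr xy W i by simp
    also have "\<dots> = th i ((p @ x) @ W @ (y @ r))" by simp
    finally have "s * z * t = th i ((p @ x) @ W @ (y @ r))" .
    moreover have "p @ x \<in> lists Sig" "y @ r \<in> lists Sig" using pr xy by auto
    ultimately show "s * z * t \<in> K" unfolding K_def by blast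
  qed
  from II_min[OF i this KI] have "K = II i" using WK hW by auto
  with g have "g \<in> K" by simp
  then obtain x y where xy: "x \<in> lists Sig" "y \<in> lists Sig" "g = th i (x @ W @ y)" unfolding K_def by blast
  then show ?thesis using a by (intro exI[of _ x] exI[of _ a] exI[of _ y]) (simp add: W_def)
qed

lemma rep_bound:
  assumes i: "i < k" and u: "u \<in> lists Sig" and un: "th i u \<noteq> 0\<^sub>m (d i) (d i)"
    and gI: "g \<in> II i" and gn: "g \<noteq> 0\<^sub>m (d i) (d i)"
    and rep: "u_represents n Sig delta d psi u i g w"
    and w': "w' \<in> lists Sig" and hI: "th i w' \<in> II i" and hn: "th i w' \<noteq> 0\<^sub>m (d i) (d i)"
  shows "rk n delta w \<le> rk n delta w'"
proof -
  obtain x a y where xay: "x \<in> lists Sig" "a \<in> lists Sig" "y \<in> lists Sig" "g = th i (x @ w' @ a @ u @ y)"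
    using keyG[OF i u un w' hI hn gI] by blast
  have fl: "(x @ w' @ a) @ u @ y \<in> factor_lang Sig u" using xay w' by (intro factor_langI) auto
  have "rk n delta w \<le> rk n delta ((x @ w' @ a) @ u @ y)"
    using rep gn fl xay(4) unfolding u_represents_def by auto
  also have "\<dots> = rk n delta (x @ w' @ (a @ u @ y))" by simp
  also have "\<dots> \<le> rk n delta w'" using rk_factor[OF aut xay(1)] xay u by simp
  finally show ?thesis .
qed

end


theorem mainTheorem5:
  fixes n :: nat and Sig :: "'a set" and delta :: "nat \<Rightarrow> 'a \<Rightarrow> nat"
    and k :: nat and d :: "nat \<Rightarrow> nat" and psi :: "complex mat \<Rightarrow> nat \<Rightarrow> complex mat"
    and v u :: "'a list" and i :: nat
  assumes aut: "is_automaton n Sig delta"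
    and sync: "synchronizing n Sig delta"
    and wed: "wedderburn (gen_alg n Sig delta) (n - 1) k d psi"
    and v: "v \<in> lists Sig"
    and umin: "v_minimal n Sig delta k d psi v u"
    and i: "i \<in> supp n delta k d psi u"
  shows "(\<forall>g \<in> Ideal_I n Sig delta d psi i. \<exists>w. u_represents n Sig delta d psi u i g w)
    \<and> (\<forall>g \<in> Ideal_I n Sig delta d psi i - {0\<^sub>m (d i) (d i)}. \<forall>w.
          u_represents n Sig delta d psi u i g w \<longrightarrow> rk n delta w = Rnk_I n Sig delta d psi i)
    \<and> (\<forall>x \<in> lists Sig. (\<exists>i' \<in> supp n delta k d psi u. theta n delta psi i' x = 0\<^sub>m (d i') (d i'))
          \<longrightarrow> (\<forall>j \<in> supp n delta k d psi u. theta n delta psi j x = 0\<^sub>m (d j) (d j)))"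
proof -
  interpret setting n Sig delta k d psi by unfold_locales (rule aut sync wed)+
  let ?th = "theta n delta psi"
  let ?I = "Ideal_I n Sig delta d psi i"
  let ?z = "0\<^sub>m (d i) (d i)"
  have ufl: "u \<in> factor_lang Sig v" using umin unfolding v_minimal_def by blast
  have u: "u \<in> lists Sig" using factor_lang_lists[OF v ufl] .
  have ik: "i < k" and un: "?th i u \<noteq> ?z" using i unfolding supp_def by auto
  have P1: "\<forall>g \<in> ?I. \<exists>w. u_represents n Sig delta d psi u i g w"
  proof
    fix g assume gI: "g \<in> ?I"
    show "\<exists>w. u_represents n Sig delta d psi u i g w"
    proof (cases "g = ?z")
      case True
      obtain s where s: "s \<in> lists Sig" "\<And>i. i < k \<Longrightarrow> ?th i s = 0\<^sub>m (d i) (d i)" using sync_word by blast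
      have "?th i (s @ u @ []) = ?z" using th_zero_mid[OF lists.Nil s(1) _ ik, of "u @ []"] u s(2)[OF ik] by simp
      moreover have "s @ u @ [] \<in> factor_lang Sig u" using s by (intro factor_langI) auto
      ultimately show ?thesis using True unfolding u_represents_def by blast
    next
      case False
      have "g \<in> S i" using II_ideal[OF ik] gI unfolding monoid_ideal_def by blast
      then obtain w0 where w0: "w0 \<in> lists Sig" "g = ?th i w0" by auto
      obtain x a y where xay: "x \<in> lists Sig" "a \<in> lists Sig" "y \<in> lists Sig" "g = ?th i (x @ w0 @ a @ u @ y)"
        using keyG[OF ik u un w0(1) _ _ gI] w0 gI False by blast
      have fl: "(x @ w0 @ a) @ u @ y \<in> factor_lang Sig u" using xay w0 by (intro factor_langI) auto
      have ex: "\<exists>r w. w \<in> factor_lang Sig u \<and> ?th i w = g \<and> rk n delta w = r"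
        using fl xay(4) by auto
      define r0 where "r0 = (LEAST r. \<exists>w. w \<in> factor_lang Sig u \<and> ?th i w = g \<and> rk n delta w = r)"
      obtain w where w: "w \<in> factor_lang Sig u" "?th i w = g" "rk n delta w = r0"
        using LeastI_ex[OF ex] r0_def by blast
      have "rk n delta w \<le> rk n delta w'" if "w' \<in> factor_lang Sig u" "?th i w' = g" for w'
      proof -
        have "r0 \<le> rk n delta w'" unfolding r0_def by (rule Least_le) (use that in blast)
        then show ?thesis using w(3) by simp
      qed
      then show ?thesis using w unfolding u_represents_def by blast
    qed
  qed
  have P2: "\<forall>g \<in> ?I - {?z}. \<forall>w. u_represents n Sig delta d psi u i g w \<longrightarrow> rk n delta w = Rnk_I n Sig delta d psi i"
  proof (intro ballI allI impI)
    fix g w assume g: "g \<in> ?I - {?z}" and rep: "u_represents n Sig delta d psi u i g w"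
    have gI: "g \<in> ?I" and gn: "g \<noteq> ?z" using g by auto
    have wl: "w \<in> lists Sig" and wg: "?th i w = g" using rep factor_lang_lists[OF u] unfolding u_represents_def by auto
    have bound: "rk n delta w \<le> rk n delta w'" if "w' \<in> lists Sig" "?th i w' \<in> ?I" "?th i w' \<noteq> ?z" for w'
      by (rule rep_bound[OF ik u un gI gn rep that])
    have Rg: "Rnk_i n Sig delta psi i g = rk n delta w"
      unfolding Rnk_i_def
    proof (rule Least_equality)
      show "\<exists>u\<in>lists Sig. ?th i u = g \<and> rk n delta u = rk n delta w" using wl wg by blast
      fix y assume "\<exists>u\<in>lists Sig. ?th i u = g \<and> rk n delta u = y"
      then obtain u' where "u' \<in> lists Sig" "?th i u' = g" "rk n delta u' = y" by blast
      then show "rk n delta w \<le> y" using bound gI gn by blast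
    qed
    show "rk n delta w = Rnk_I n Sig delta d psi i"
      unfolding Rnk_I_def
    proof (rule Least_equality[symmetric])
      show "\<exists>g'\<in>?I - {?z}. Rnk_i n Sig delta psi i g' = rk n delta w" using g Rg by blast
      fix y assume "\<exists>g'\<in>?I - {?z}. Rnk_i n Sig delta psi i g' = y"
      then obtain g' where g': "g' \<in> ?I" "g' \<noteq> ?z" "Rnk_i n Sig delta psi i g' = y" by blast
      have "g' \<in> S i" using II_ideal[OF ik] g'(1) unfolding monoid_ideal_def by blast
      then obtain w0 where w0: "w0 \<in> lists Sig" "g' = ?th i w0" by auto
      have ex: "\<exists>r. \<exists>u\<in>lists Sig. ?th i u = g' \<and> rk n delta u = r" using w0 by blast
      obtain u' where u': "u' \<in> lists Sig" "?th i u' = g'" "rk n delta u' = Rnk_i n Sig delta psi i g'"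
        using LeastI_ex[OF ex] unfolding Rnk_i_def by blast
      show "rk n delta w \<le> y" using bound[OF u'(1)] u' g' by simp
    qed
  qed
  have P3: "\<forall>x \<in> lists Sig. (\<exists>i' \<in> supp n delta k d psi u. ?th i' x = 0\<^sub>m (d i') (d i'))
          \<longrightarrow> (\<forall>j \<in> supp n delta k d psi u. ?th j x = 0\<^sub>m (d j) (d j))"
  proof (intro ballI impI)
    fix x j assume x: "x \<in> lists Sig" and ex: "\<exists>i' \<in> supp n delta k d psi u. ?th i' x = 0\<^sub>m (d i') (d i')"
      and j: "j \<in> supp n delta k d psi u"
    obtain i' where i': "i' \<in> supp n delta k d psi u" "?th i' x = 0\<^sub>m (d i') (d i')" using ex by blast
    have jk: "j < k" and uj: "?th j u \<noteq> 0\<^sub>m (d j) (d j)" using j unfolding supp_def by auto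
    have i'k: "i' < k" using i' unfolding supp_def by auto
    show "?th j x = 0\<^sub>m (d j) (d j)"
    proof (rule ccontr)
      assume xn: "?th j x \<noteq> 0\<^sub>m (d j) (d j)"
      obtain a where a: "a \<in> lists Sig" "?th j u * ?th j a * ?th j x \<noteq> 0\<^sub>m (d j) (d j)"
        using prime[OF jk th_carrier[OF u jk] th_carrier[OF x jk] uj xn] by blast
      have uax: "?th j (u @ a @ x) \<noteq> 0\<^sub>m (d j) (d j)" using a th3[OF u a(1) x jk] by simp
      have uaxl: "u @ a @ x \<in> lists Sig" using u a x by simp
      obtain b where b: "b \<in> lists Sig" "?th j (u @ a @ x) * ?th j b * ?th j u \<noteq> 0\<^sub>m (d j) (d j)"
        using prime[OF jk th_carrier[OF uaxl jk] th_carrier[OF u jk] uax uj] by blast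
      define z where "z = u @ a @ x @ b @ u"
      have zl: "z \<in> lists Sig" using u a b x by (simp add: z_def)
      have zj: "?th j z \<noteq> 0\<^sub>m (d j) (d j)" using b th3[OF uaxl b(1) u jk] by (simp add: z_def)
      from ufl obtain p q where pq: "p \<in> lists Sig" "q \<in> lists Sig" "u = p @ v @ q"
        unfolding factor_lang_def by blast
      have zfl: "z \<in> factor_lang Sig v"
      proof -
        have "z = p @ v @ (q @ a @ x @ b @ u)" by (simp add: z_def pq(3))
        moreover have "q @ a @ x @ b @ u \<in> lists Sig" using pq a x b u by simp
        ultimately show ?thesis using pq(1) factor_langI by metis
      qed
      have sub: "supp n delta k d psi z \<subseteq> supp n delta k d psi u"
      proof
        fix l assume l: "l \<in> supp n delta k d psi z"
        hence lk: "l < k" and zl0: "?th l z \<noteq> 0\<^sub>m (d l) (d l)" unfolding supp_def by auto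
        have "?th l u \<noteq> 0\<^sub>m (d l) (d l)"
        proof
          assume "?th l u = 0\<^sub>m (d l) (d l)"
          hence "?th l ([] @ u @ (a @ x @ b @ u)) = 0\<^sub>m (d l) (d l)"
            using th_zero_mid[OF lists.Nil u _ lk] a x b u by simp
          then show False using zl0 by (simp add: z_def)
        qed
        then show "l \<in> supp n delta k d psi u" using lk unfolding supp_def by simp
      qed
      have ua: "u @ a \<in> lists Sig" and bu: "b @ u \<in> lists Sig" using u a b by auto
      have "?th i' ((u @ a) @ x @ (b @ u)) = 0\<^sub>m (d i') (d i')"
        by (rule th_zero_mid[OF ua x bu i'k i'(2)])
      hence "i' \<notin> supp n delta k d psi z" unfolding supp_def by (simp add: z_def)
      hence "supp n delta k d psi z \<subset> supp n delta k d psi u" using sub i'(1) by blast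
      moreover have "supp n delta k d psi z \<noteq> {}" using zj jk unfolding supp_def by auto
      ultimately show False using umin zfl unfolding v_minimal_def by blast
    qed
  qed
  show ?thesis using P1 P2 P3 by blast
qed


end
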